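(* Let $\mathcal K\subseteq\mathbb{Z}$ be finite and $\Omega=\bigcup_{k\in\mathcal K}(k\pi,\,k\pi+\pi)$. Then $\cot:\Omega\to\mathbb{R}$ is amenable.
   Context: Relative distance on $\mathbb{R}$: $\mathrm{dist}(x,y)=0$ if $x=y=0$, $\mathrm{dist}(x,y)=|\log(y/x)|$ if $xy>0$, and $\mathrm{dist}(x,y)=\infty$ otherwise. For a real analytic function $f$ on an open set $\Omega\subseteq\mathbb{R}$, not identically zero, the condition number is $\kappa(f,x)=0$ if $x=0$, $\kappa(f,x)=\infty$ if $x\neq0$ and $f(x)=0$, and $\kappa(f,x)=|x|\,|f'(x)|/|f(x)|$ otherwise; $\mu(f,x)=1+\kappa(f,x)$. $f:\Omega\to\mathbb{R}$ is amenable if there is $C>0$ such that for every $x\in\Omega$ with $\kappa(f,x)<\infty$, the set $B_x=\{y\in\mathbb{R}:\mathrm{dist}(y,x)<1/(C\mu(f,x))\}$ is contained in $\Omega$ and $\mu(f,y)\leq C\mu(f,x)$ for all $y\in B_x$. *)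

theory Defs
  imports "HOL-Analysis.Analysis"
begin

definition reldist :: "real \<Rightarrow> real \<Rightarrow> ereal" where
  "reldist x y = (if x = 0 \<and> y = 0 then 0
                  else if x * y > 0 then ereal \<bar>ln (y / x)\<bar>
                  else \<infinity>)"

definition cond_num :: "(real \<Rightarrow> real) \<Rightarrow> real \<Rightarrow> ereal" where
  "cond_num f x = (if x = 0 then 0
                   else if f x = 0 then \<infinity>
                   else ereal (\<bar>x\<bar> * \<bar>deriv f x\<bar> / \<bar>f x\<bar>))"

definition mu_num :: "(real \<Rightarrow> real) \<Rightarrow> real \<Rightarrow> ereal" where
  "mu_num f x = 1 + cond_num f x"

definition amenable :: "(real \<Rightarrow> real) \<Rightarrow> real set \<Rightarrow> bool" where
  "amenable f \<Omega> \<longleftrightarrow> (\<exists>C::real. C > 0 \<and>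
     (\<forall>x\<in>\<Omega>. cond_num f x < \<infinity> \<longrightarrow>
        {y. reldist y x < 1 / (ereal C * mu_num f x)} \<subseteq> \<Omega> \<and>
        (\<forall>y\<in>{y. reldist y x < 1 / (ereal C * mu_num f x)}.
            mu_num f y \<le> ereal C * mu_num f x)))"

end

theory Submission
  imports Defs
begin

lemma sin_lip: "\<bar>sin a - sin b\<bar> \<le> \<bar>a - b\<bar>" for a b :: real
proof -
  have "\<bar>sin a - sin b\<bar> = 2 * \<bar>sin ((a - b) / 2)\<bar> * \<bar>cos ((a + b) / 2)\<bar>"
    by (simp add: sin_diff_sin abs_mult)
  also have "\<dots> \<le> 2 * \<bar>(a - b) / 2\<bar> * 1"
    by (intro mult_mono abs_sin_x_le_abs_x) auto
  finally show ?thesis by simp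
qed

lemma cond_cot:
  assumes "x \<noteq> 0" "sin (2 * x) \<noteq> 0"
  shows "cond_num cot x = ereal (2 * \<bar>x\<bar> / \<bar>sin (2 * x)\<bar>)"
proof -
  have s: "sin x \<noteq> 0" and c: "cos x \<noteq> 0" using assms(2) by (auto simp: sin_double)
  have d: "deriv cot x = - inverse ((sin x)\<^sup>2)"
    using DERIV_cot[OF s] by (rule DERIV_imp_deriv)
  have cz: "cot x \<noteq> 0" using s c by (simp add: cot_def)
  have "\<bar>x\<bar> * \<bar>deriv cot x\<bar> / \<bar>cot x\<bar> = \<bar>x\<bar> * (1 / (sin x)^2) / (\<bar>cos x\<bar> / \<bar>sin x\<bar>)"
    unfolding d apply (simp add: cot_def abs_divide) by (simp add: divide_inverse)
  also have "\<dots> = 2 * \<bar>x\<bar> / \<bar>sin (2 * x)\<bar>"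
  proof -
    have "\<bar>sin (2 * x)\<bar> = 2 * \<bar>sin x\<bar> * \<bar>cos x\<bar>" by (simp add: sin_double abs_mult)
    moreover have "(sin x)^2 = \<bar>sin x\<bar> * \<bar>sin x\<bar>" by (simp add: power2_eq_square abs_mult[symmetric])
    ultimately show ?thesis using s c by (simp add: field_simps)
  qed
  finally have "\<bar>x\<bar> * \<bar>deriv cot x\<bar> / \<bar>cot x\<bar> = 2 * \<bar>x\<bar> / \<bar>sin (2 * x)\<bar>" .
  then show ?thesis using assms(1) cz by (simp add: cond_num_def)
qed

lemma exp_near: fixes l :: real assumes "\<bar>l\<bar> \<le> 1/2" shows "\<bar>exp l - 1\<bar> \<le> 2 * \<bar>l\<bar>"
proof (cases "l \<ge> 0")
  case True
  then show ?thesis using real_exp_bound_lemma[of l] assms by auto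
next
  case False
  have "1 + l \<le> exp l" by (rule exp_ge_add_one_self)
  moreover have "exp l \<le> 1" using False by simp
  ultimately show ?thesis using False by linarith
qed

theorem mainTheorem12:
  fixes K :: "int set"
  assumes "finite K"
  shows "amenable cot (\<Union>k\<in>K. {real_of_int k * pi <..< real_of_int k * pi + pi})"
proof -
  define \<Omega> where "\<Omega> = (\<Union>k\<in>K. {real_of_int k * pi <..< real_of_int k * pi + pi})"
  have main: "{y. reldist y x < 1 / (ereal 4 * mu_num cot x)} \<subseteq> \<Omega> \<and>
        (\<forall>y\<in>{y. reldist y x < 1 / (ereal 4 * mu_num cot x)}. mu_num cot y \<le> ereal 4 * mu_num cot x)"
    if xO: "x \<in> \<Omega>" and fin: "cond_num cot x < \<infinity>" for x
  proof -
    obtain k where kK: "k \<in> K" and xk: "real_of_int k * pi < x" "x < real_of_int k * pi + pi"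
      using xO by (auto simp: \<Omega>_def)
    have x0: "x \<noteq> 0"
    proof
      assume "x = 0"
      then have "real_of_int k * pi < 0" "0 < (real_of_int k + 1) * pi" using xk by (auto simp: algebra_simps)
      then have "k < 0" "-1 < k" by (auto simp: mult_less_0_iff zero_less_mult_iff)
      then show False by simp
    qed
    have sx: "sin x \<noteq> 0"
    proof
      assume "sin x = 0"
      then obtain i :: int where "x = i * pi" by (auto simp: sin_zero_iff_int2)
      with xk have "real_of_int k * pi < real_of_int i * pi" "real_of_int i * pi < real_of_int (k + 1) * pi"
        by (auto simp: algebra_simps)
      then have "k < i" "i < k + 1" using pi_gt_zero by (simp_all add: mult_less_cancel_right)
      then show False by simp
    qed
    have cx: "cos x \<noteq> 0"
    proof
      assume "cos x = 0"
      then have "cot x = 0" by (simp add: cot_def)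
      then show False using fin x0 by (simp add: cond_num_def)
    qed
    define S where "S = \<bar>sin (2 * x)\<bar>"
    have S0: "S > 0" using sx cx by (simp add: S_def sin_double)
    define \<kappa> where "\<kappa> = 2 * \<bar>x\<bar> / S"
    have kpos: "\<kappa> > 0" using S0 x0 by (simp add: \<kappa>_def)
    have cn: "cond_num cot x = ereal \<kappa>" using cond_cot[OF x0] S0 by (simp add: S_def \<kappa>_def)
    have mux: "mu_num cot x = ereal (1 + \<kappa>)" by (simp add: mu_num_def cn)
    define r where "r = 1 / (4 * (1 + \<kappa>))"
    have rpos: "r > 0" and rle: "r \<le> 1/4" using kpos by (auto simp: r_def field_simps)
    have rk: "r * \<kappa> < 1/4" using kpos by (simp add: r_def field_simps)
    have ball: "1 / (ereal 4 * mu_num cot x) = ereal r"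
    proof -
      have "ereal 4 * mu_num cot x = ereal (4 * (1 + \<kappa>))" by (simp add: mux)
      moreover have "1 / ereal (4 * (1 + \<kappa>)) = ereal r"
        using kpos unfolding r_def one_ereal_def divide_ereal_def by (simp add: inverse_eq_divide)
      ultimately show ?thesis by simp
    qed
    have key: "y \<in> {real_of_int k * pi <..< real_of_int k * pi + pi} \<and> mu_num cot y \<le> ereal 4 * mu_num cot x"
      if yr: "reldist y x < ereal r" for y
    proof -
      have xy: "y * x > 0" and l: "\<bar>ln (x / y)\<bar> < r"
        using yr x0 by (auto simp: reldist_def split: if_splits)
      define l where "l = ln (y / x)"
      have yx: "y / x > 0" using xy by (auto simp: zero_less_divide_iff zero_less_mult_iff)
      have "x / y = inverse (y / x)" by simp
      then have "ln (x / y) = - l" using ln_inverse[of "y / x"] unfolding l_def by simp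
      then have lr: "\<bar>l\<bar> < r" using l by simp
      have "y = x * exp l" using yx x0 by (simp add: l_def)
      then have "y - x = x * (exp l - 1)" by (simp add: algebra_simps)
      then have "\<bar>y - x\<bar> = \<bar>x\<bar> * \<bar>exp l - 1\<bar>" by (simp add: abs_mult)
      also have "\<dots> \<le> \<bar>x\<bar> * (2 * r)"
        using exp_near[of l] lr rle by (intro mult_left_mono) auto
      finally have dyx: "\<bar>y - x\<bar> \<le> 2 * \<bar>x\<bar> * r" by simp
      have "2 * \<bar>x\<bar> * r = r * \<kappa> * S" using S0 by (simp add: \<kappa>_def)
      also have "\<dots> < S / 4" using rk S0 by (simp add: mult_strict_right_mono)
      finally have dS: "\<bar>y - x\<bar> < S / 4" using dyx by linarith
      have lowb: "\<bar>sin (2 * z)\<bar> > S / 2" if "\<bar>z - x\<bar> < S / 4" for z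
      proof -
        have "\<bar>sin (2 * z) - sin (2 * x)\<bar> \<le> \<bar>2 * z - 2 * x\<bar>" by (rule sin_lip)
        then show ?thesis using that unfolding S_def by linarith
      qed
      have sk: "sin (2 * (real_of_int k * pi)) = 0"
      proof -
        have "2 * (real_of_int k * pi) = real_of_int (2 * k) * pi" by simp
        then show ?thesis by (subst sin_zero_iff_int2) blast
      qed
      have sk1: "sin (2 * (real_of_int k * pi + pi)) = 0"
      proof -
        have "2 * (real_of_int k * pi + pi) = real_of_int (2 * k + 2) * pi" by (simp add: algebra_simps)
        then show ?thesis by (subst sin_zero_iff_int2) blast
      qed
      have y1: "real_of_int k * pi < y"
      proof (rule ccontr)
        assume "\<not> ?thesis"
        then have "\<bar>real_of_int k * pi - x\<bar> < S / 4" using xk dS by auto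
        from lowb[OF this] sk S0 show False by simp
      qed
      have y2: "y < real_of_int k * pi + pi"
      proof (rule ccontr)
        assume "\<not> ?thesis"
        then have "\<bar>real_of_int k * pi + pi - x\<bar> < S / 4" using xk dS by auto
        from lowb[OF this] sk1 S0 show False by simp
      qed
      have sy: "\<bar>sin (2 * y)\<bar> > S / 2" using lowb dS by simp
      have y0: "y \<noteq> 0" using xy by auto
      have sy0: "sin (2 * y) \<noteq> 0" using sy S0 by auto
      have absy: "\<bar>y\<bar> \<le> 2 * \<bar>x\<bar>" using dyx rle x0
      proof -
        have "\<bar>y\<bar> \<le> \<bar>x\<bar> + \<bar>y - x\<bar>" by linarith
        also have "\<dots> \<le> \<bar>x\<bar> + 2 * \<bar>x\<bar> * r" using dyx by simp
        also have "\<dots> \<le> 2 * \<bar>x\<bar>"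
        proof -
          have "\<bar>x\<bar> * (2 * r) \<le> \<bar>x\<bar> * 1" using rle by (intro mult_left_mono) auto
          then show ?thesis by (simp add: algebra_simps)
        qed
        finally show ?thesis .
      qed
      have "2 * \<bar>y\<bar> / \<bar>sin (2 * y)\<bar> \<le> 2 * (2 * \<bar>x\<bar>) / (S / 2)"
        using absy sy S0 by (intro frac_le) auto
      also have "\<dots> = 4 * \<kappa>" by (simp add: \<kappa>_def)
      finally have ky: "2 * \<bar>y\<bar> / \<bar>sin (2 * y)\<bar> \<le> 4 * \<kappa>" .
      have "mu_num cot y = ereal (1 + 2 * \<bar>y\<bar> / \<bar>sin (2 * y)\<bar>)"
        using cond_cot[OF y0 sy0] by (simp add: mu_num_def)
      also have "\<dots> \<le> ereal 4 * mu_num cot x" using ky kpos by (simp add: mux)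
      finally show ?thesis using y1 y2 by simp
    qed
    show ?thesis using key kK unfolding ball \<Omega>_def by blast
  qed
  show ?thesis unfolding amenable_def \<Omega>_def[symmetric]
    by (rule exI[of _ 4]) (use main in auto)
qed

end
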